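(* Let $G:=\mathrm{Cay}(\Gamma,S)$ be a Cayley graph, $r\ge2$ an integer, and $X$ an $r$-local $2$-separator of $G$. Then no cycle in $G$ of length at most $r$ strongly traverses $X$. In particular, if a word $w$ in $S$ strongly traverses $X$, then $w$ is not a cyclic subword of any morpheme of $\Gamma$ in $S$ of length at most $r$.
   Context: A generating set excludes the identity $\mathbb{I}$ and is closed under inverses; $\mathrm{Cay}(\Gamma,S)$ is the simple graph on $\Gamma$ with edges $\{g,gs\}$. Ball $B_r(v)$: the subgraph of all vertices and edges on closed walks of length $\le r$ through $v$. For a 2-set $X=\{v_0,v_1\}$, $N(X)$ is the set of vertices outside $X$ adjacent to $X$; the connectivity graph $C_r(v_0,v_1)$ has vertex set $N(X)$, with $a,b$ adjacent if for some $i$ they lie in the same component of $B_r(v_i)-v_0-v_1$. $X$ is an $r$-local $2$-separator if $C_r(v_0,v_1)$ is disconnected and $d_G(v_0,v_1)\le r/2$; its $r$-local components are the components of $C_r(v_0,v_1)$. A traversal of $X$ is a walk whose two ends lie in distinct $r$-local components at $X$ and all of whose internal vertices lie in $X$; it is strong if it has exactly two internal vertices. A cycle (as a closed walk) strongly traverses $X$ if some cyclic subwalk of it (a subwalk of a cyclic rotation of it or of its reverse) is a strong traversal of $X$. A word $w=a_1\cdots a_k$ in $S$ strongly traverses $X$ if for some vertex $v$ the walk $v,va_1,va_1a_2,\ldots,va_1\cdots a_k$ has a subwalk that is a strong traversal of $X$. A morpheme of $\Gamma$ in $S$ is a nonempty word in $S$ evaluating to $\mathbb{I}$ none of whose nonempty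 proper contiguous subwords evaluates to $\mathbb{I}$. A word $u$ is a cyclic subword of $w$ if $u$ or $u^{-1}$ is a contiguous subword of a cyclic permutation of $w$. *)

theory Defs
  imports "HOL-Algebra.Generated_Groups"
begin

definition cay_adj :: "('a,'b) monoid_scheme \<Rightarrow> 'a set \<Rightarrow> 'a \<Rightarrow> 'a \<Rightarrow> bool" where
  "cay_adj G S g h \<longleftrightarrow> g \<in> carrier G \<and> h \<in> carrier G \<and> (\<exists>s\<in>S. h = g \<otimes>\<^bsub>G\<^esub> s)"

text \<open>A walk is a nonempty vertex list with consecutive vertices adjacent; its length is
  the number of edges, i.e. length - 1.\<close>
definition is_walk :: "('a,'b) monoid_scheme \<Rightarrow> 'a set \<Rightarrow> 'a list \<Rightarrow> bool" where
  "is_walk G S ws \<longleftrightarrow> ws \<noteq> [] \<and> set ws \<subseteq> carrier G \<and>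
     (\<forall>i. Suc i < length ws \<longrightarrow> cay_adj G S (ws ! i) (ws ! Suc i))"

definition closed_walk_through :: "('a,'b) monoid_scheme \<Rightarrow> 'a set \<Rightarrow> nat \<Rightarrow> 'a \<Rightarrow> 'a list \<Rightarrow> bool" where
  "closed_walk_through G S r v ws \<longleftrightarrow> is_walk G S ws \<and> hd ws = last ws \<and>
     length ws - 1 \<le> r \<and> v \<in> set ws"

definition ball_verts :: "('a,'b) monoid_scheme \<Rightarrow> 'a set \<Rightarrow> nat \<Rightarrow> 'a \<Rightarrow> 'a set" where
  "ball_verts G S r v = {x. \<exists>ws. closed_walk_through G S r v ws \<and> x \<in> set ws}"

definition ball_edge :: "('a,'b) monoid_scheme \<Rightarrow> 'a set \<Rightarrow> nat \<Rightarrow> 'a \<Rightarrow> 'a \<Rightarrow> 'a \<Rightarrow> bool" where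
  "ball_edge G S r v a b \<longleftrightarrow> (\<exists>ws i. closed_walk_through G S r v ws \<and> Suc i < length ws \<and>
     {ws ! i, ws ! Suc i} = {a, b})"

definition ball_conn :: "('a,'b) monoid_scheme \<Rightarrow> 'a set \<Rightarrow> nat \<Rightarrow> 'a \<Rightarrow> 'a set \<Rightarrow> 'a \<Rightarrow> 'a \<Rightarrow> bool" where
  "ball_conn G S r v X a b \<longleftrightarrow> a \<in> ball_verts G S r v - X \<and> b \<in> ball_verts G S r v - X \<and>
     (a, b) \<in> {(x, y). ball_edge G S r v x y \<and> x \<notin> X \<and> y \<notin> X}\<^sup>*"

definition nbhd :: "('a,'b) monoid_scheme \<Rightarrow> 'a set \<Rightarrow> 'a set \<Rightarrow> 'a set" where
  "nbhd G S X = {y \<in> carrier G. y \<notin> X \<and> (\<exists>x\<in>X. cay_adj G S x y)}"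

definition conn_adj :: "('a,'b) monoid_scheme \<Rightarrow> 'a set \<Rightarrow> nat \<Rightarrow> 'a set \<Rightarrow> 'a \<Rightarrow> 'a \<Rightarrow> bool" where
  "conn_adj G S r X a b \<longleftrightarrow> a \<in> nbhd G S X \<and> b \<in> nbhd G S X \<and> (\<exists>v\<in>X. ball_conn G S r v X a b)"

definition same_local_comp :: "('a,'b) monoid_scheme \<Rightarrow> 'a set \<Rightarrow> nat \<Rightarrow> 'a set \<Rightarrow> 'a \<Rightarrow> 'a \<Rightarrow> bool" where
  "same_local_comp G S r X a b \<longleftrightarrow> a \<in> nbhd G S X \<and> b \<in> nbhd G S X \<and>
     (a, b) \<in> {(x, y). conn_adj G S r X x y}\<^sup>*"

definition local_2sep :: "('a,'b) monoid_scheme \<Rightarrow> 'a set \<Rightarrow> nat \<Rightarrow> 'a set \<Rightarrow> bool" where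
  "local_2sep G S r X \<longleftrightarrow> (\<exists>v0 v1. X = {v0, v1} \<and> v0 \<noteq> v1 \<and> v0 \<in> carrier G \<and> v1 \<in> carrier G \<and>
     (\<exists>a\<in>nbhd G S X. \<exists>b\<in>nbhd G S X. \<not> same_local_comp G S r X a b) \<and>
     (\<exists>ws. is_walk G S ws \<and> hd ws = v0 \<and> last ws = v1 \<and> 2 * (length ws - 1) \<le> r))"

definition strong_trav :: "('a,'b) monoid_scheme \<Rightarrow> 'a set \<Rightarrow> nat \<Rightarrow> 'a set \<Rightarrow> 'a list \<Rightarrow> bool" where
  "strong_trav G S r X ws \<longleftrightarrow> is_walk G S ws \<and> length ws = 4 \<and> ws ! 1 \<in> X \<and> ws ! 2 \<in> X \<and>
     ws ! 0 \<in> nbhd G S X \<and> ws ! 3 \<in> nbhd G S X \<and> \<not> same_local_comp G S r X (ws ! 0) (ws ! 3)"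

definition is_cycle :: "('a,'b) monoid_scheme \<Rightarrow> 'a set \<Rightarrow> 'a list \<Rightarrow> bool" where
  "is_cycle G S cs \<longleftrightarrow> length cs \<ge> 3 \<and> distinct cs \<and> set cs \<subseteq> carrier G \<and>
     (\<forall>i < length cs. cay_adj G S (cs ! i) (cs ! ((Suc i) mod length cs)))"

definition cyc_window :: "'a list \<Rightarrow> nat \<Rightarrow> nat \<Rightarrow> 'a list" where
  "cyc_window cs i k = map (\<lambda>j. cs ! ((i + j) mod length cs)) [0..<Suc k]"

definition cycle_strongly_traverses :: "('a,'b) monoid_scheme \<Rightarrow> 'a set \<Rightarrow> nat \<Rightarrow> 'a set \<Rightarrow> 'a list \<Rightarrow> bool" where
  "cycle_strongly_traverses G S r X cs \<longleftrightarrow>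
     (\<exists>i k. k \<le> length cs \<and> (strong_trav G S r X (cyc_window cs i k) \<or> strong_trav G S r X (cyc_window (rev cs) i k)))"

definition word_eval :: "('a,'b) monoid_scheme \<Rightarrow> 'a list \<Rightarrow> 'a" where
  "word_eval G w = foldr (\<lambda>a b. a \<otimes>\<^bsub>G\<^esub> b) w \<one>\<^bsub>G\<^esub>"

definition word_walk :: "('a,'b) monoid_scheme \<Rightarrow> 'a \<Rightarrow> 'a list \<Rightarrow> 'a list" where
  "word_walk G v w = map (\<lambda>k. v \<otimes>\<^bsub>G\<^esub> word_eval G (take k w)) [0..<Suc (length w)]"

definition word_strongly_traverses :: "('a,'b) monoid_scheme \<Rightarrow> 'a set \<Rightarrow> nat \<Rightarrow> 'a set \<Rightarrow> 'a list \<Rightarrow> bool" where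
  "word_strongly_traverses G S r X w \<longleftrightarrow>
     (\<exists>v\<in>carrier G. \<exists>p ws q. word_walk G v w = p @ ws @ q \<and> strong_trav G S r X ws)"

definition morpheme :: "('a,'b) monoid_scheme \<Rightarrow> 'a set \<Rightarrow> 'a list \<Rightarrow> bool" where
  "morpheme G S m \<longleftrightarrow> m \<noteq> [] \<and> set m \<subseteq> S \<and> word_eval G m = \<one>\<^bsub>G\<^esub> \<and>
     (\<forall>p u q. m = p @ u @ q \<and> u \<noteq> [] \<and> (p \<noteq> [] \<or> q \<noteq> []) \<longrightarrow> word_eval G u \<noteq> \<one>\<^bsub>G\<^esub>)"

definition word_inv :: "('a,'b) monoid_scheme \<Rightarrow> 'a list \<Rightarrow> 'a list" where
  "word_inv G w = rev (map (\<lambda>a. inv\<^bsub>G\<^esub> a) w)"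

definition cyclic_subword :: "('a,'b) monoid_scheme \<Rightarrow> 'a list \<Rightarrow> 'a list \<Rightarrow> bool" where
  "cyclic_subword G u w \<longleftrightarrow> (\<exists>k p q. rotate k w = p @ u @ q \<or> rotate k w = p @ word_inv G u @ q)"

end

theory Submission
  imports Defs "HOL-Number_Theory.Cong"
begin

lemma we_closed:
  fixes G (structure)
  assumes "group G" "set xs \<subseteq> carrier G" shows "word_eval G xs \<in> carrier G"
proof -
  interpret group G by fact
  show ?thesis using assms(2) by (induction xs) (auto simp: word_eval_def)
qed

lemma we_append:
  fixes G (structure)
  assumes "group G" "set xs \<subseteq> carrier G" "set ys \<subseteq> carrier G"
  shows "word_eval G (xs @ ys) = word_eval G xs \<otimes>\<^bsub>G\<^esub> word_eval G ys"
proof -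
  interpret group G by fact
  show ?thesis using assms(2)
  proof (induction xs)
    case Nil then show ?case using we_closed[OF assms(1,3)] by (simp add: word_eval_def)
  next
    case (Cons a xs)
    then have "word_eval G (xs @ ys) = word_eval G xs \<otimes> word_eval G ys" by simp
    moreover have "word_eval G ((a # xs) @ ys) = a \<otimes> word_eval G (xs @ ys)"
      by (simp add: word_eval_def)
    moreover have "word_eval G (a # xs) = a \<otimes> word_eval G xs" by (simp add: word_eval_def)
    ultimately show ?case using Cons.prems we_closed[OF assms(1) _] assms(3)
      by (simp add: m_assoc)
  qed
qed

lemma we_single: fixes G (structure) assumes "group G" "a \<in> carrier G" shows "word_eval G [a] = a"
proof -
  interpret group G by fact
  show ?thesis using assms(2) by (simp add: word_eval_def)
qed

lemma we_inv:
  fixes G (structure)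
  assumes "group G" "set u \<subseteq> carrier G"
  shows "word_eval G (word_inv G u) = inv\<^bsub>G\<^esub> (word_eval G u)"
proof -
  interpret group G by fact
  show ?thesis using assms(2)
  proof (induction u)
    case Nil then show ?case by (simp add: word_eval_def word_inv_def)
  next
    case (Cons a u)
    have wi: "word_inv G (a # u) = word_inv G u @ [inv a]" by (simp add: word_inv_def)
    have s: "set (word_inv G u) \<subseteq> carrier G" using Cons.prems by (auto simp: word_inv_def)
    have "word_eval G (word_inv G (a # u)) = inv (word_eval G u) \<otimes> inv a"
      using Cons s by (simp add: wi we_append[OF assms(1)] we_single[OF assms(1)])
    also have "\<dots> = inv (a \<otimes> word_eval G u)"
      using Cons.prems we_closed[OF assms(1)] by (simp add: inv_mult_group)
    finally show ?case by (simp add: word_eval_def)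
  qed
qed

lemma word_inv_append: "word_inv G (xs @ ys) = word_inv G ys @ word_inv G xs"
  by (simp add: word_inv_def)

lemma word_inv_inv:
  fixes G (structure)
  assumes "group G" "set u \<subseteq> carrier G" shows "word_inv G (word_inv G u) = u"
proof -
  interpret group G by fact
  have "map (\<lambda>a. inv (inv a)) u = u" using assms(2) by (induction u) auto
  then show ?thesis by (simp add: word_inv_def rev_map comp_def)
qed

lemma morph_inv:
  fixes G (structure)
  assumes "group G" "S \<subseteq> carrier G" "\<forall>s\<in>S. inv\<^bsub>G\<^esub> s \<in> S" "morpheme G S m"
  shows "morpheme G S (word_inv G m)"
proof -
  interpret group G by fact
  have mc: "set m \<subseteq> carrier G" using assms(2,4) by (auto simp: morpheme_def)
  show ?thesis unfolding morpheme_def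
  proof (intro conjI allI impI)
    show "word_inv G m \<noteq> []" using assms(4) by (simp add: morpheme_def word_inv_def)
    show "set (word_inv G m) \<subseteq> S" using assms(3,4) by (auto simp: morpheme_def word_inv_def)
    show "word_eval G (word_inv G m) = \<one>"
      using assms(4) mc by (simp add: we_inv[OF assms(1)] morpheme_def)
  next
    fix p u q
    assume h: "word_inv G m = p @ u @ q \<and> u \<noteq> [] \<and> (p \<noteq> [] \<or> q \<noteq> [])"
    have "m = word_inv G (p @ u @ q)" using h word_inv_inv[OF assms(1) mc] by metis
    then have m: "m = word_inv G q @ word_inv G u @ word_inv G p" by (simp add: word_inv_append)
    have uc: "set u \<subseteq> carrier G" using h mc by (metis Un_subset_iff set_append word_inv_def set_rev set_map
          image_subsetI inv_closed subset_iff)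
    have "word_eval G (word_inv G u) \<noteq> \<one>" using assms(4) m h
      unfolding morpheme_def by (metis (no_types) Nil_is_append_conv rev_is_Nil_conv map_is_Nil_conv word_inv_def)
    then show "word_eval G u \<noteq> \<one>" using we_inv[OF assms(1) uc] by auto
  qed
qed


lemma morph_rotate1:
  fixes G (structure)
  assumes "group G" "S \<subseteq> carrier G" "morpheme G S m"
  shows "morpheme G S (rotate1 m)"
proof -
  interpret group G by fact
  obtain a rest where m: "m = a # rest" using assms(3) by (cases m) (auto simp: morpheme_def)
  have ac: "a \<in> carrier G" and rc: "set rest \<subseteq> carrier G" using assms(2,3) m by (auto simp: morpheme_def)
  have Rc: "word_eval G rest \<in> carrier G" using we_closed[OF assms(1) rc] .
  have e1: "a \<otimes> word_eval G rest = \<one>" using assms(3) m by (simp add: morpheme_def word_eval_def)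
  have mp: "\<And>p u q. m = p @ u @ q \<Longrightarrow> u \<noteq> [] \<Longrightarrow> p \<noteq> [] \<or> q \<noteq> [] \<Longrightarrow> word_eval G u \<noteq> \<one>"
    using assms(3) unfolding morpheme_def by blast
  show ?thesis unfolding morpheme_def
  proof (intro conjI allI impI)
    show "rotate1 m \<noteq> []" using m by simp
    show "set (rotate1 m) \<subseteq> S" using assms(3) by (simp add: morpheme_def)
    show "word_eval G (rotate1 m) = \<one>"
      using m e1 ac Rc rc by (simp add: we_append[OF assms(1)] we_single[OF assms(1)] inv_comm)
  next
    fix p u q
    assume h: "rotate1 m = p @ u @ q \<and> u \<noteq> [] \<and> (p \<noteq> [] \<or> q \<noteq> [])"
    then have h2: "rest @ [a] = p @ u @ q" using m by simp
    show "word_eval G u \<noteq> \<one>"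
    proof (cases "q = []")
      case False
      then obtain q' where q: "q = q' @ [a]" using h2
        by (metis append_assoc append_butlast_last_id last_appendR last_snoc)
      then have "rest = p @ u @ q'" using h2 by simp
      then have "m = (a # p) @ u @ q'" using m by simp
      then show ?thesis using mp h by blast
    next
      case True
      then have h3: "rest @ [a] = p @ u" using h2 by simp
      then obtain u' where u: "u = u' @ [a]" using h
        by (metis append_butlast_last_id last_appendR last_snoc)
      then have rest: "rest = p @ u'" using h3 by simp
      have pne: "p \<noteq> []" using h True by simp
      have pc: "set p \<subseteq> carrier G" and uc: "set u' \<subseteq> carrier G" using rc rest by auto
      have P: "word_eval G p \<in> carrier G" and U: "word_eval G u' \<in> carrier G"
        using we_closed[OF assms(1)] pc uc by auto
      show ?thesis
      proof
        assume "word_eval G u = \<one>"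
        then have "word_eval G u' \<otimes> a = \<one>" using u uc ac
          by (simp add: we_append[OF assms(1)] we_single[OF assms(1)])
        then have iu: "inv a = word_eval G u'" using inv_equality ac U by blast
        have "a \<otimes> (word_eval G p \<otimes> inv a) = \<one>" using e1 rest pc uc iu
          by (simp add: we_append[OF assms(1)])
        then have "(a \<otimes> word_eval G p) \<otimes> inv a = \<one>" using ac P by (simp add: m_assoc)
        then have "inv (inv a) = a \<otimes> word_eval G p" using inv_equality ac P by blast
        then have "word_eval G p = \<one>" using ac P by simp
        moreover have "m = [a] @ p @ u'" using m rest by simp
        ultimately show False using mp pne by blast
      qed
    qed
  qed
qed


lemma morph_rotate:
  fixes G (structure)
  assumes "group G" "S \<subseteq> carrier G" "morpheme G S m"
  shows "morpheme G S (rotate k m)"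
  by (induction k) (auto simp: rotate_Suc assms morph_rotate1)

lemma ww_length: "length (word_walk G v w) = Suc (length w)"
  by (simp add: word_walk_def)

lemma ww_nth: "k \<le> length w \<Longrightarrow> word_walk G v w ! k = v \<otimes>\<^bsub>G\<^esub> word_eval G (take k w)"
  unfolding word_walk_def by (simp del: upt_Suc add: nth_map_upt)

lemma ww_walk:
  fixes G (structure)
  assumes "group G" "S \<subseteq> carrier G" "v \<in> carrier G" "set w \<subseteq> S"
  shows "is_walk G S (word_walk G v w)"
proof -
  interpret group G by fact
  have wc: "set w \<subseteq> carrier G" using assms by auto
  have cl: "\<And>k. word_eval G (take k w) \<in> carrier G"
    using we_closed[OF assms(1)] wc by (meson order_trans set_take_subset)
  show ?thesis unfolding is_walk_def
  proof (intro conjI allI impI)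
    show "word_walk G v w \<noteq> []" by (simp add: word_walk_def)
    show "set (word_walk G v w) \<subseteq> carrier G" using assms(3) cl we_closed[OF assms(1) wc] by (auto simp: word_walk_def)
  next
    fix i assume i: "Suc i < length (word_walk G v w)"
    then have il: "i < length w" by (simp add: ww_length)
    have t: "take (Suc i) w = take i w @ [w ! i]" using il by (simp add: take_Suc_conv_app_nth)
    have wi: "w ! i \<in> S" using il assms(4) by auto
    have wic: "w ! i \<in> carrier G" using wi assms(2) by auto
    have tc: "set (take i w) \<subseteq> carrier G" using wc by (meson order_trans set_take_subset)
    have "word_eval G (take (Suc i) w) = word_eval G (take i w) \<otimes> w ! i"
      using t tc wic by (simp add: we_append[OF assms(1)] we_single[OF assms(1)])
    then have "word_walk G v w ! Suc i = (v \<otimes> word_eval G (take i w)) \<otimes> w ! i"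
      using il wic assms(3) cl by (simp add: ww_nth m_assoc)
    then show "cay_adj G S (word_walk G v w ! i) (word_walk G v w ! Suc i)"
      unfolding cay_adj_def using il wi assms cl by (auto simp: ww_nth)
  qed
qed


lemma walk_path:
  assumes "is_walk G S W" "closed_walk_through G S r x0 W"
  shows "i \<le> j \<Longrightarrow> j < length W \<Longrightarrow> (\<forall>k. i \<le> k \<and> k \<le> j \<longrightarrow> W ! k \<notin> X) \<Longrightarrow>
    (W ! i, W ! j) \<in> {(x, y). ball_edge G S r x0 x y \<and> x \<notin> X \<and> y \<notin> X}\<^sup>*"
proof (induction j)
  case 0 then show ?case by simp
next
  case (Suc j)
  show ?case
  proof (cases "i = Suc j")
    case True then show ?thesis by simp
  next
    case False
    then have ij: "i \<le> j" using Suc.prems by simp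
    have IH: "(W ! i, W ! j) \<in> {(x, y). ball_edge G S r x0 x y \<and> x \<notin> X \<and> y \<notin> X}\<^sup>*"
      using Suc ij by simp
    have "ball_edge G S r x0 (W ! j) (W ! Suc j)"
      unfolding ball_edge_def using assms(2) Suc.prems by blast
    moreover have "W ! j \<notin> X" "W ! Suc j \<notin> X" using Suc.prems ij by auto
    ultimately show ?thesis using IH by (simp add: rtrancl.rtrancl_into_rtrancl)
  qed
qed

lemma core:
  assumes "is_walk G S W" "hd W = last W" "length W - 1 \<le> r" "t + 3 < length W"
    "length ws = 4" "\<forall>j<4. ws ! j = W ! (t+j)" "strong_trav G S r X ws"
    "\<forall>j<length W. j \<noteq> t+1 \<and> j \<noteq> t+2 \<longrightarrow> W ! j \<notin> X"
  shows False
proof -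
  define x0 where "x0 = W ! (t+1)"
  define R where "R = {(x, y). ball_edge G S r x0 x y \<and> x \<notin> X \<and> y \<notin> X}"
  have cw: "closed_walk_through G S r x0 W" unfolding closed_walk_through_def x0_def
    using assms(1-4) by auto
  have Wne: "W \<noteq> []" using assms(4) by auto
  have p1: "(W ! (t+3), W ! (length W - 1)) \<in> R\<^sup>*" unfolding R_def
    by (rule walk_path[OF assms(1) cw]) (use assms(4,8) in auto)
  have p2: "(W ! 0, W ! t) \<in> R\<^sup>*" unfolding R_def
    by (rule walk_path[OF assms(1) cw]) (use assms(4,8) in auto)
  have "W ! (length W - 1) = W ! 0" using assms(2) Wne by (simp add: hd_conv_nth last_conv_nth)
  then have ba: "(W ! (t+3), W ! t) \<in> R\<^sup>*" using p1 p2 by simp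
  have "R\<inverse> = R" unfolding R_def ball_edge_def by (auto simp: insert_commute)
  then have ab: "(W ! t, W ! (t+3)) \<in> R\<^sup>*" using rtrancl_converseI[OF ba] by simp
  have ws0: "ws ! 0 = W ! t" and ws3: "ws ! 3 = W ! (t+3)" and ws1: "ws ! 1 = x0"
    using assms(6) x0_def by auto
  have inX: "x0 \<in> X" using assms(7) ws1 by (simp add: strong_trav_def)
  have bv: "W ! t \<in> ball_verts G S r x0" "W ! (t+3) \<in> ball_verts G S r x0"
    unfolding ball_verts_def using cw assms(4) by (auto intro!: exI[of _ W])
  have nX: "W ! t \<notin> X" "W ! (t+3) \<notin> X" using assms(4,8) by auto
  have "ball_conn G S r x0 X (W ! t) (W ! (t+3))"
    unfolding ball_conn_def using bv nX ab R_def by auto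
  then have "conn_adj G S r X (ws ! 0) (ws ! 3)"
    unfolding conn_adj_def using assms(7) inX ws0 ws3 by (auto simp: strong_trav_def)
  then have "same_local_comp G S r X (ws ! 0) (ws ! 3)"
    unfolding same_local_comp_def using assms(7) by (auto simp: strong_trav_def)
  then show False using assms(7) by (simp add: strong_trav_def)
qed


lemma modarith:
  fixes n i j a :: nat
  assumes "j \<le> n" "a < n" "0 < a" "j \<noteq> a" "(i + j) mod n = (i + a) mod n"
  shows False
proof -
  have "[i + j = i + a] (mod n)" using assms(5) by (simp add: cong_def)
  then have "[j = a] (mod n)" by (simp add: cong_add_lcancel_nat)
  then have "j mod n = a" using assms(2) by (simp add: cong_def)
  then show False using assms by (cases "j = n") auto
qed


lemma cyc_part:
  fixes G (structure)
  assumes "length c \<ge> 3" "distinct c" "set c \<subseteq> carrier G"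
    "\<forall>i<length c. cay_adj G S (c ! i) (c ! (Suc i mod length c))" "length c \<le> r"
    "strong_trav G S r X (cyc_window c i k)" "local_2sep G S r X"
  shows False
proof -
  define n where "n = length c"
  have n3: "n \<ge> 3" using assms(1) n_def by simp
  have k3: "k = 3" using assms(6) by (simp add: strong_trav_def cyc_window_def)
  define W where "W = cyc_window c i n"
  have Wl: "length W = Suc n" by (simp add: W_def cyc_window_def)
  have Wn: "\<And>j. j \<le> n \<Longrightarrow> W ! j = c ! ((i + j) mod n)"
    unfolding W_def cyc_window_def n_def by (simp del: upt_Suc add: nth_map_upt)
  have npos: "0 < n" using n3 by simp
  have walk: "is_walk G S W" unfolding is_walk_def
  proof (intro conjI allI impI)
    show "W \<noteq> []" using Wl by auto
    show "set W \<subseteq> carrier G" using assms(3) npos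
      by (auto simp: W_def cyc_window_def n_def)
  next
    fix j assume "Suc j < length W"
    then have j: "Suc j \<le> n" using Wl by simp
    have "cay_adj G S (c ! ((i + j) mod n)) (c ! (Suc ((i + j) mod n) mod n))"
      using assms(4) npos n_def by simp
    moreover have "Suc ((i + j) mod n) mod n = (i + Suc j) mod n" by (simp add: mod_Suc_eq)
    ultimately show "cay_adj G S (W ! j) (W ! Suc j)" using Wn j by simp
  qed
  have Wne: "W \<noteq> []" using Wl by auto
  have hl: "hd W = last W"
  proof -
    have "hd W = W ! 0" using Wne by (simp add: hd_conv_nth)
    moreover have "last W = W ! n" using Wne Wl by (simp add: last_conv_nth)
    ultimately show ?thesis using Wn[of 0] Wn[of n] by simp
  qed
  have ws: "\<forall>j<4. cyc_window c i k ! j = W ! (0 + j)"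
    using k3 Wn n3 by (auto simp: cyc_window_def n_def)
  have st: "strong_trav G S r X (cyc_window c i k)" by fact
  obtain v0 v1 where X: "X = {v0, v1}" "v0 \<noteq> v1" using assms(7) by (auto simp: local_2sep_def)
  have w1: "W ! 1 \<in> X" and w2: "W ! 2 \<in> X" using st ws by (auto simp: strong_trav_def numeral_2_eq_2)
  have dist: "\<And>j a. j \<le> n \<Longrightarrow> a < n \<Longrightarrow> 0 < a \<Longrightarrow> j \<noteq> a \<Longrightarrow> W ! j \<noteq> W ! a"
  proof
    fix j a assume h: "j \<le> n" "a < n" "0 < a" "j \<noteq> a" "W ! j = W ! a"
    then have "c ! ((i + j) mod n) = c ! ((i + a) mod n)" using Wn by simp
    then have "(i + j) mod n = (i + a) mod n" using assms(2) npos n_def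
      by (simp add: nth_eq_iff_index_eq)
    then show False using modarith h by blast
  qed
  have "W ! 1 \<noteq> W ! 2" using dist[of 1 2] n3 by simp
  then have X2: "X = {W ! 1, W ! 2}" using X w1 w2 by auto
  have out: "\<forall>j<length W. j \<noteq> 0+1 \<and> j \<noteq> 0+2 \<longrightarrow> W ! j \<notin> X"
    using dist n3 Wl X2 by (auto simp: less_Suc_eq_le)
  show False
    by (rule core[OF walk hl _ _ _ ws st out]) (use Wl n_def assms(5) k3 n3 in \<open>auto simp: cyc_window_def\<close>)
qed


lemma adj_sym:
  fixes G (structure)
  assumes "group G" "S \<subseteq> carrier G" "\<forall>s\<in>S. inv s \<in> S" "cay_adj G S g h"
  shows "cay_adj G S h g"
proof -
  interpret group G by fact
  obtain s where s: "s \<in> S" "h = g \<otimes> s" "g \<in> carrier G" "h \<in> carrier G"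
    using assms(4) by (auto simp: cay_adj_def)
  have sc: "s \<in> carrier G" using s assms(2) by auto
  have "g = h \<otimes> inv s" using s sc by (simp add: m_assoc)
  then show ?thesis using s assms(3) by (auto simp: cay_adj_def)
qed

lemma rev_cyc:
  fixes G (structure)
  assumes "group G" "S \<subseteq> carrier G" "\<forall>s\<in>S. inv s \<in> S" "is_cycle G S c"
  shows "\<forall>i<length (rev c). cay_adj G S (rev c ! i) (rev c ! (Suc i mod length (rev c)))"
proof (intro allI impI)
  fix i assume i: "i < length (rev c)"
  define n where "n = length c"
  have n3: "n \<ge> 3" using assms(4) by (simp add: is_cycle_def n_def)
  have adj: "\<And>j. j < n \<Longrightarrow> cay_adj G S (c ! j) (c ! (Suc j mod n))"
    using assms(4) by (simp add: is_cycle_def n_def)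
  have il: "i < n" using i n_def by simp
  show "cay_adj G S (rev c ! i) (rev c ! (Suc i mod length (rev c)))"
  proof (cases "Suc i < n")
    case True
    have "cay_adj G S (c ! (n - 2 - i)) (c ! (Suc (n - 2 - i) mod n))" by (rule adj) (use n3 in simp)
    moreover have "Suc (n - 2 - i) mod n = n - 1 - i" using True by simp
    ultimately have "cay_adj G S (c ! (n - 1 - Suc i)) (c ! (n - 1 - i))" by (simp add: diff_diff_add)
    then show ?thesis using True il adj_sym[OF assms(1-3)] by (simp add: rev_nth n_def)
  next
    case False
    then have iv: "i = n - 1" using il by simp
    have "cay_adj G S (c ! (n - 1)) (c ! (Suc (n - 1) mod n))" by (rule adj) (use n3 in simp)
    then have "cay_adj G S (c ! (n - 1)) (c ! 0)" using n3 by simp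
    then have "cay_adj G S (c ! 0) (c ! (n - 1))" using adj_sym[OF assms(1-3)] by blast
    moreover have "Suc i mod length (rev c) = 0"
    proof -
      have "Suc i = length c" using iv n3 n_def by simp
      then show ?thesis by simp
    qed
    moreover have "rev c ! 0 = c ! (n - 1)" using n3 n_def by (subst rev_nth) auto
    moreover have "rev c ! i = c ! 0" using iv n3 n_def by (subst rev_nth) auto
    ultimately show ?thesis by simp
  qed
qed

lemma part1:
  fixes G (structure)
  assumes "group G" "S \<subseteq> carrier G" "\<forall>s\<in>S. inv s \<in> S" "local_2sep G S r X"
    "is_cycle G S cs" "length cs \<le> r"
  shows "\<not> cycle_strongly_traverses G S r X cs"
proof
  assume "cycle_strongly_traverses G S r X cs"
  then obtain i k where "strong_trav G S r X (cyc_window cs i k) \<or> strong_trav G S r X (cyc_window (rev cs) i k)"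
    by (auto simp: cycle_strongly_traverses_def)
  then show False
  proof
    assume "strong_trav G S r X (cyc_window cs i k)"
    then show False using cyc_part[of cs G S r X i k] assms(4-6) by (auto simp: is_cycle_def)
  next
    assume "strong_trav G S r X (cyc_window (rev cs) i k)"
    then show False using cyc_part[of "rev cs" G S r X i k] assms(4-6) rev_cyc[OF assms(1-3,5)]
      by (auto simp: is_cycle_def)
  qed
qed


lemma part2:
  fixes G (structure)
  assumes "group G" "S \<subseteq> carrier G" "local_2sep G S r X"
    "set w \<subseteq> S" "v \<in> carrier G" "word_walk G v w = p1 @ ws @ q1" "strong_trav G S r X ws"
    "morpheme G S m" "m = p @ w @ q" "length m \<le> r"
  shows False
proof -
  interpret group G by fact
  define n where "n = length m"
  have l4: "length ws = 4" using assms(7) by (simp add: strong_trav_def)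
  have lw: "length p1 + 3 \<le> length w"
    using arg_cong[OF assms(6), of length] l4 by (simp add: ww_length)
  have mc: "set m \<subseteq> carrier G" using assms(2,8) by (auto simp: morpheme_def)
  have mS: "set m \<subseteq> S" using assms(8) by (simp add: morpheme_def)
  have pc: "set p \<subseteq> carrier G" using mc assms(9) by auto
  have wc: "set w \<subseteq> carrier G" using mc assms(9) by auto
  have P: "word_eval G p \<in> carrier G" using we_closed[OF assms(1) pc] .
  have tc: "\<And>k. word_eval G (take k m) \<in> carrier G"
    using we_closed[OF assms(1)] mc by (meson order_trans set_take_subset)
  have twc: "\<And>k. word_eval G (take k w) \<in> carrier G"
    using we_closed[OF assms(1)] wc by (meson order_trans set_take_subset)
  define g where "g = v \<otimes> inv (word_eval G p)"
  have gc: "g \<in> carrier G" using g_def P assms(5) by simp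
  have gP: "g \<otimes> word_eval G p = v" using g_def P assms(5) by (simp add: m_assoc)
  define W where "W = word_walk G g m"
  have walk: "is_walk G S W" using ww_walk[OF assms(1,2) gc mS] W_def by simp
  have Wl: "length W = Suc n" using W_def n_def by (simp add: ww_length)
  have Wn: "\<And>j. j \<le> n \<Longrightarrow> W ! j = g \<otimes> word_eval G (take j m)"
    using W_def n_def by (simp add: ww_nth)
  have e1: "word_eval G m = \<one>" using assms(8) by (simp add: morpheme_def)
  have Wne: "W \<noteq> []" using Wl by auto
  have hl: "hd W = last W"
  proof -
    have "hd W = W ! 0" using Wne by (simp add: hd_conv_nth)
    moreover have "last W = W ! n" using Wne Wl by (simp add: last_conv_nth)
    ultimately show ?thesis using Wn[of 0] Wn[of n] gc e1 n_def by (simp add: word_eval_def)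
  qed
  define t where "t = length p + length p1"
  have tn: "t + 3 \<le> n" using lw assms(9) n_def t_def by simp
  have ws: "\<forall>j<4. ws ! j = W ! (t + j)"
  proof (intro allI impI)
    fix j :: nat assume j: "j < 4"
    have "ws ! j = word_walk G v w ! (length p1 + j)" using assms(6) j l4 by (simp add: nth_append)
    also have "\<dots> = v \<otimes> word_eval G (take (length p1 + j) w)" using lw j by (simp add: ww_nth)
    also have "\<dots> = g \<otimes> (word_eval G p \<otimes> word_eval G (take (length p1 + j) w))"
      using gP gc P twc by (simp add: m_assoc[symmetric])
    also have "\<dots> = g \<otimes> word_eval G (take (t + j) m)"
    proof -
      have "take (t + j) m = p @ take (length p1 + j) w" using assms(9) t_def lw j by simp
      moreover have "set (take (length p1 + j) w) \<subseteq> carrier G"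
        using wc by (meson order_trans set_take_subset)
      ultimately show ?thesis using we_append[OF assms(1) pc] by simp
    qed
    also have "\<dots> = W ! (t + j)" using Wn tn j by simp
    finally show "ws ! j = W ! (t + j)" .
  qed
  have mp: "\<And>p u q. m = p @ u @ q \<Longrightarrow> u \<noteq> [] \<Longrightarrow> p \<noteq> [] \<or> q \<noteq> [] \<Longrightarrow> word_eval G u \<noteq> \<one>"
    using assms(8) unfolding morpheme_def by blast
  have dlt: "\<And>j1 j2. j1 < j2 \<Longrightarrow> j2 \<le> n \<Longrightarrow> 0 < j1 \<or> j2 < n \<Longrightarrow> W ! j1 \<noteq> W ! j2"
  proof
    fix j1 j2 assume h: "j1 < j2" "j2 \<le> n" "0 < j1 \<or> j2 < n" "W ! j1 = W ! j2"
    define u where "u = drop j1 (take j2 m)"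
    have tt: "take j2 m = take j1 m @ u" unfolding u_def
      by (metis append_take_drop_id h(1) less_imp_le min.absorb1 take_take)
    have mm: "m = take j1 m @ u @ drop j2 m" using tt by (metis append_assoc append_take_drop_id)
    have une: "u \<noteq> []" using h n_def by (simp add: u_def)
    have pq: "take j1 m \<noteq> [] \<or> drop j2 m \<noteq> []" using h n_def by auto
    have uc: "set u \<subseteq> carrier G" using mc mm by (metis Un_subset_iff set_append)
    have t1c: "set (take j1 m) \<subseteq> carrier G" using mc by (meson order_trans set_take_subset)
    have U: "word_eval G u \<in> carrier G" using we_closed[OF assms(1) uc] .
    have "W ! j2 = (g \<otimes> word_eval G (take j1 m)) \<otimes> word_eval G u"
      using Wn[of j2] h tt we_append[OF assms(1) t1c uc] gc tc U by (simp add: m_assoc)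
    also have "\<dots> = W ! j1 \<otimes> word_eval G u" using Wn[of j1] h by simp
    finally have "W ! j1 \<otimes> word_eval G u = W ! j1" using h by simp
    then have "word_eval G u = \<one>" using U gc tc Wn[of j1] h by simp
    then show False using mp[OF mm une pq] by simp
  qed
  have dist: "\<And>j a. j \<le> n \<Longrightarrow> a < n \<Longrightarrow> 0 < a \<Longrightarrow> j \<noteq> a \<Longrightarrow> W ! j \<noteq> W ! a"
  proof -
    fix j a assume h: "j \<le> n" "a < n" "0 < a" "j \<noteq> a"
    show "W ! j \<noteq> W ! a"
    proof (cases "j < a")
      case True then show ?thesis using dlt[of j a] h by simp
    next
      case False then show ?thesis using dlt[of a j] h by auto
    qed
  qed
  obtain v0 v1 where X: "X = {v0, v1}" "v0 \<noteq> v1" using assms(3) by (auto simp: local_2sep_def)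
  have w1: "W ! (t+1) \<in> X" and w2: "W ! (t+2) \<in> X" using assms(7) ws
    by (auto simp: strong_trav_def numeral_2_eq_2)
  have "W ! (t+1) \<noteq> W ! (t+2)" using dist[of "t+1" "t+2"] tn by simp
  then have X2: "X = {W ! (t+1), W ! (t+2)}" using X w1 w2 by auto
  have out: "\<forall>j<length W. j \<noteq> t+1 \<and> j \<noteq> t+2 \<longrightarrow> W ! j \<notin> X"
    using dist tn Wl X2 by (auto simp: less_Suc_eq_le)
  show False
    by (rule core[OF walk hl _ _ l4 ws assms(7) out]) (use Wl n_def assms(10) tn in auto)
qed


theorem lemma5p10:
  fixes G :: "('a, 'b) monoid_scheme" and S :: "'a set" and r :: nat and X :: "'a set"
  assumes "group G"
    and "S \<subseteq> carrier G" and "\<one>\<^bsub>G\<^esub> \<notin> S" and "\<forall>s\<in>S. inv\<^bsub>G\<^esub> s \<in> S"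
    and "generate G S = carrier G"
    and "r \<ge> 2"
    and "local_2sep G S r X"
  shows "(\<forall>cs. is_cycle G S cs \<and> length cs \<le> r \<longrightarrow> \<not> cycle_strongly_traverses G S r X cs) \<and>
         (\<forall>w. set w \<subseteq> S \<and> word_strongly_traverses G S r X w \<longrightarrow>
              (\<forall>m. morpheme G S m \<and> length m \<le> r \<longrightarrow> \<not> cyclic_subword G w m))"
proof (intro conjI allI impI)
  fix cs assume "is_cycle G S cs \<and> length cs \<le> r"
  then show "\<not> cycle_strongly_traverses G S r X cs" using part1[OF assms(1,2,4,7)] by blast
next
  fix w m assume hw: "set w \<subseteq> S \<and> word_strongly_traverses G S r X w"
    and hm: "morpheme G S m \<and> length m \<le> r"
  show "\<not> cyclic_subword G w m"
  proof
    assume "cyclic_subword G w m"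
    then obtain k p q where c: "rotate k m = p @ w @ q \<or> rotate k m = p @ word_inv G w @ q"
      by (auto simp: cyclic_subword_def)
    obtain v p1 ws q1 where v: "v \<in> carrier G" "word_walk G v w = p1 @ ws @ q1"
      "strong_trav G S r X ws" using hw by (auto simp: word_strongly_traverses_def)
    have mr: "morpheme G S (rotate k m)" using morph_rotate[OF assms(1,2)] hm by blast
    from c show False
    proof
      assume "rotate k m = p @ w @ q"
      moreover have "length (rotate k m) \<le> r" using hm by simp
      ultimately show False using part2[OF assms(1,2,7) _ v mr] hw by blast
    next
      assume h: "rotate k m = p @ word_inv G w @ q"
      have wc: "set w \<subseteq> carrier G" using hw assms(2) by auto
      have "word_inv G (rotate k m) = word_inv G q @ w @ word_inv G p"
        using h word_inv_inv[OF assms(1) wc] by (simp add: word_inv_append)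
      moreover have "morpheme G S (word_inv G (rotate k m))"
        using morph_inv[OF assms(1,2,4) mr] .
      moreover have "length (word_inv G (rotate k m)) \<le> r" using hm by (simp add: word_inv_def)
      ultimately show False using part2[OF assms(1,2,7) _ v] hw by blast
    qed
  qed
qed

end
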